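(* Let $b\in(0,1)$ be a dyadic rational with exactly $n\ge 2$ binary digits, i.e. $b=0.b_2b_3\cdots b_{n-1}1$ in base $2$. Then $$\mathrm{ext}(P_b)=\mathrm{ext}(P_{b-2^{1-n}})+\mathrm{ext}(P_{b+2^{1-n}}),$$ with the convention $\mathrm{ext}(P_1)=0$.
   Context: For a finite poset $P$, $\mathrm{ext}(P)$ denotes the number of linear extensions of $P$. Say a dyadic rational $b\in[0,1)$ "has $n$ digits" if its base-2 expansion needs exactly $n$ digits counting the digit before the point: $b=0$ has $1$ digit, and for $n\ge2$ the numbers with $n$ digits are $k/2^{n-1}$ with $k$ odd. Posets $P_b$ (with $|P_b|$ equal to the number of digits of $b$), together with distinguished elements $L_b,R_b$, are defined recursively. $P_0$ is a single element $R_0$ (no $L_0$). $P_{1/2}$ is the two-element chain $L_{1/2}<R_{1/2}$. For $n\ge2$ and $b$ with $n$ digits: (i) $P_{b-2^{-n}}$ is obtained from $P_b$ by adding a new element $x$ that lies below every element of $P_b$ except $L_b$, with which it is incomparable; set $R_{b-2^{-n}}=x$, $L_{b-2^{-n}}=L_b$. (ii) $P_{b+2^{-n}}$ is obtained from $P_b$ by adding a new element $x$ that lies below every element of $P_b$ except $R_b$ if $R_b$ is minimal in $P_b$ (in which case $x$ and $R_b$ are incomparable), and below every element of $P_b$ if $R_b$ is not minimal; set $L_{b+2^{-n}}=x$, $R_{b+2^{-n}}=R_b$. (In all cases $L_b$ is minimal in $P_b$.) *)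

theory Defs
  imports Complex_Main
begin

definition ext :: "'a set \<Rightarrow> ('a \<times> 'a) set \<Rightarrow> nat" where
  "ext A S = card {xs. distinct xs \<and> set xs = A \<and>
      (\<forall>i j. i < length xs \<longrightarrow> j < length xs \<longrightarrow> (xs ! i, xs ! j) \<in> S \<longrightarrow> i < j)}"

text \<open>pos n k: the poset P_b for b = k / 2^(n-1) (n = number of digits; k odd if n \<ge> 2).
  Carrier is {0..<n}; the element added at stage m (size m+1) is m.
  Result: (strict order relation, L_b, R_b).  For n = 1 (b = 0) there is no L; the L
  component is then meaningless.\<close>
fun pos :: "nat \<Rightarrow> nat \<Rightarrow> (nat \<times> nat) set \<times> nat \<times> nat" where
  "pos 0 k = ({}, 0, 0)"
| "pos (Suc 0) k = ({}, 0, 0)"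
| "pos (Suc (Suc 0)) k = ({(0, 1)}, 0, 1)"
| "pos (Suc (Suc (Suc m))) k =
     (let n = Suc (Suc m) in
      if odd ((k + 1) div 2) then
        \<comment> \<open>k/2^n = b - 2^(-n) with b = ((k+1) div 2)/2^(n-1): rule (i)\<close>
        (case pos n ((k + 1) div 2) of (S, L, R) \<Rightarrow>
          (S \<union> {(n, y) | y. y < n \<and> y \<noteq> L}, L, n))
      else
        \<comment> \<open>k/2^n = b + 2^(-n) with b = ((k-1) div 2)/2^(n-1): rule (ii)\<close>
        (case pos n ((k - 1) div 2) of (S, L, R) \<Rightarrow>
          (if (\<forall>y. (y, R) \<notin> S)
           then S \<union> {(n, y) | y. y < n \<and> y \<noteq> R}
           else S \<union> {(n, y) | y. y < n}, n, R)))"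

definition digits_code :: "real \<Rightarrow> nat \<Rightarrow> nat \<Rightarrow> bool" where
  "digits_code b n k \<longleftrightarrow> (n = 1 \<and> k = 0 \<and> b = 0) \<or>
     (n \<ge> 2 \<and> odd k \<and> k < 2 ^ (n - 1) \<and> b = real k / 2 ^ (n - 1))"

definition has_digits :: "real \<Rightarrow> nat \<Rightarrow> bool" where
  "has_digits b n \<longleftrightarrow> (\<exists>k. digits_code b n k)"

definition extP :: "real \<Rightarrow> nat" where
  "extP b = (if b = 1 then 0 else
     (case (THE (n, k). digits_code b n k) of (n, k) \<Rightarrow> ext {0..<n} (fst (pos n k))))"

end

theory Submission
  imports Defs
begin

definition okl :: "('a \<times> 'a) set \<Rightarrow> 'a list \<Rightarrow> bool" where
  "okl S xs = (\<forall>i j. i < length xs \<longrightarrow> j < length xs \<longrightarrow> (xs ! i, xs ! j) \<in> S \<longrightarrow> i < j)"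

definition Ext :: "'a set \<Rightarrow> ('a \<times> 'a) set \<Rightarrow> 'a list set" where
  "Ext A S = {xs. distinct xs \<and> set xs = A \<and> okl S xs}"

lemma ext_Ext: "ext A S = card (Ext A S)"
  unfolding ext_def Ext_def okl_def by simp

lemma okl_Nil[simp]: "okl S []" by (simp add: okl_def)

lemma okl_Cons: "okl S (x # ys) \<longleftrightarrow> (x, x) \<notin> S \<and> (\<forall>y\<in>set ys. (y, x) \<notin> S) \<and> okl S ys"
proof
  assume h: "okl S (x # ys)"
  have 1: "(x, x) \<notin> S"
  proof
    assume "(x, x) \<in> S"
    have l: "0 < length (x # ys)" by simp
    have "((x # ys) ! 0, (x # ys) ! 0) \<in> S" using \<open>(x, x) \<in> S\<close> by simp
    from h[unfolded okl_def, rule_format, OF l l this] show False by simp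
  qed
  have 2: "(y, x) \<notin> S" if yin: "y \<in> set ys" for y
  proof -
    obtain j where j: "j < length ys" "ys ! j = y" using yin by (auto simp: in_set_conv_nth)
    show ?thesis using h[unfolded okl_def, rule_format, of "Suc j" 0] j by (simp; blast)
  qed
  have 3: "okl S ys" unfolding okl_def
  proof (intro allI impI)
    fix i j assume "i < length ys" "j < length ys" "(ys ! i, ys ! j) \<in> S"
    then show "i < j" using h[unfolded okl_def, rule_format, of "Suc i" "Suc j"] by simp
  qed
  show "(x, x) \<notin> S \<and> (\<forall>y\<in>set ys. (y, x) \<notin> S) \<and> okl S ys" using 1 2 3 by blast
next
  assume h: "(x, x) \<notin> S \<and> (\<forall>y\<in>set ys. (y, x) \<notin> S) \<and> okl S ys"
  then have h1: "(x, x) \<notin> S" and h2: "\<And>y. y \<in> set ys \<Longrightarrow> (y, x) \<notin> S"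
    and h3: "\<And>i j. i < length ys \<Longrightarrow> j < length ys \<Longrightarrow> (ys ! i, ys ! j) \<in> S \<Longrightarrow> i < j"
    unfolding okl_def by blast+
  show "okl S (x # ys)" unfolding okl_def
  proof (intro allI impI)
    fix i j assume a: "i < length (x # ys)" "j < length (x # ys)" "((x # ys) ! i, (x # ys) ! j) \<in> S"
    show "i < j"
    proof (cases j)
      case 0
      show ?thesis
      proof (cases i)
        case 0 then show ?thesis using a h1 \<open>j = 0\<close> by simp
      next
        case (Suc i')
        then have "ys ! i' \<in> set ys" using a by simp
        then show ?thesis using a h2 \<open>j = 0\<close> Suc by fastforce
      qed
    next
      case (Suc j')
      show ?thesis
      proof (cases i)
        case 0 then show ?thesis using Suc by simp
      next
        case (Suc i')
        have "i' < j'" using h3[of i' j'] a \<open>j = Suc j'\<close> Suc by simp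
        then show ?thesis using \<open>j = Suc j'\<close> Suc by simp
      qed
    qed
  qed
qed

lemma okl_cong:
  assumes "set xs \<subseteq> A" "S \<inter> (A \<times> A) = S' \<inter> (A \<times> A)"
  shows "okl S xs = okl S' xs"
proof -
  have "(xs ! i, xs ! j) \<in> S \<longleftrightarrow> (xs ! i, xs ! j) \<in> S'" if "i < length xs" "j < length xs" for i j
  proof -
    have "xs ! i \<in> A" "xs ! j \<in> A" using that assms(1) nth_mem by blast+
    then show ?thesis using assms(2) by blast
  qed
  then show ?thesis unfolding okl_def by blast
qed

lemma ext_cong:
  assumes "S \<inter> (A \<times> A) = S' \<inter> (A \<times> A)"
  shows "ext A S = ext A S'"
proof -
  have "Ext A S = Ext A S'" unfolding Ext_def using okl_cong[OF _ assms] by auto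
  then show ?thesis by (simp add: ext_Ext)
qed

lemma finite_Ext: "finite A \<Longrightarrow> finite (Ext A S)"
  by (rule finite_subset[OF _ finite_subset_distinct[of A]]) (auto simp: Ext_def)

lemma ext_E1:
  assumes "x \<notin> A" "(x, x) \<notin> T" "\<And>y. y \<in> A \<Longrightarrow> (x, y) \<in> T \<and> (y, x) \<notin> T"
  shows "ext (insert x A) T = ext A T"
proof -
  have "Ext (insert x A) T = (\<lambda>ys. x # ys) ` Ext A T"
  proof (intro equalityI subsetI)
    fix xs assume xs: "xs \<in> Ext (insert x A) T"
    then obtain z zs where z: "xs = z # zs" by (cases xs) (auto simp: Ext_def)
    have zx: "z = x"
    proof (rule ccontr)
      assume "z \<noteq> x"
      then have "z \<in> A" "x \<in> set zs" using xs z by (auto simp: Ext_def)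
      then show False using xs z assms(3)[of z] by (auto simp: Ext_def okl_Cons)
    qed
    have "zs \<in> Ext A T" using xs z zx assms(1) by (auto simp: Ext_def okl_Cons)
    then show "xs \<in> (\<lambda>ys. x # ys) ` Ext A T" using z zx by blast
  next
    fix xs assume "xs \<in> (\<lambda>ys. x # ys) ` Ext A T"
    then obtain ys where "xs = x # ys" "ys \<in> Ext A T" by blast
    then show "xs \<in> Ext (insert x A) T" using assms by (auto simp: Ext_def okl_Cons)
  qed
  then show ?thesis by (simp add: ext_Ext card_image)
qed

lemma ext_E2:
  assumes fin: "finite A" and "x \<notin> A" "a \<in> A" "(x, x) \<notin> T" "(x, a) \<notin> T"
    and "\<And>y. y \<in> A \<Longrightarrow> (y, x) \<notin> T \<and> (y, a) \<notin> T"
    and "\<And>y. y \<in> A \<Longrightarrow> y \<noteq> a \<Longrightarrow> (x, y) \<in> T"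
  shows "ext (insert x A) T = ext A T + ext (A - {a}) T"
proof -
  have eq: "Ext (insert x A) T = (\<lambda>ys. x # ys) ` Ext A T \<union> (\<lambda>zs. a # x # zs) ` Ext (A - {a}) T"
  proof (intro equalityI subsetI)
    fix xs assume xs: "xs \<in> Ext (insert x A) T"
    then obtain z zs where z: "xs = z # zs" by (cases xs) (auto simp: Ext_def)
    show "xs \<in> (\<lambda>ys. x # ys) ` Ext A T \<union> (\<lambda>zs. a # x # zs) ` Ext (A - {a}) T"
    proof (cases "z = x")
      case True
      have "zs \<in> Ext A T" using xs z True assms(2) by (auto simp: Ext_def okl_Cons)
      then show ?thesis using z True by blast
    next
      case False
      then have zA: "z \<in> A" and xz: "x \<in> set zs" using xs z by (auto simp: Ext_def)
      have za: "z = a"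
      proof (rule ccontr)
        assume "z \<noteq> a"
        then show False using xs z assms(7)[OF zA] xz by (auto simp: Ext_def okl_Cons)
      qed
      have "a \<noteq> x" using assms(2,3) by blast
      obtain w ws where w: "zs = w # ws" using xz by (cases zs) auto
      have wx: "w = x"
      proof (rule ccontr)
        assume "w \<noteq> x"
        then have "w \<in> A" "w \<noteq> a" "x \<in> set ws" using xs z w za \<open>a \<noteq> x\<close> by (auto simp: Ext_def)
        then show False using xs z w assms(7)[of w] by (auto simp: Ext_def okl_Cons)
      qed
      have "ws \<in> Ext (A - {a}) T" using xs z w za wx assms(2,3) by (auto simp: Ext_def okl_Cons)
      then show ?thesis using z w za wx by blast
    qed
  next
    fix xs assume "xs \<in> (\<lambda>ys. x # ys) ` Ext A T \<union> (\<lambda>zs. a # x # zs) ` Ext (A - {a}) T"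
    then show "xs \<in> Ext (insert x A) T"
    proof
      assume "xs \<in> (\<lambda>ys. x # ys) ` Ext A T"
      then obtain ys where "xs = x # ys" "ys \<in> Ext A T" by blast
      then show ?thesis using assms by (auto simp: Ext_def okl_Cons)
    next
      assume "xs \<in> (\<lambda>zs. a # x # zs) ` Ext (A - {a}) T"
      then obtain ys where "xs = a # x # ys" "ys \<in> Ext (A - {a}) T" by blast
      then show ?thesis using assms by (auto simp: Ext_def okl_Cons)
    qed
  qed
  have d: "(\<lambda>ys. x # ys) ` Ext A T \<inter> (\<lambda>zs. a # x # zs) ` Ext (A - {a}) T = {}"
    using assms(2,3) by auto
  have c1: "card ((\<lambda>ys. x # ys) ` Ext A T) = card (Ext A T)"
    by (rule card_image) (simp add: inj_on_def)
  have c2: "card ((\<lambda>zs. a # x # zs) ` Ext (A - {a}) T) = card (Ext (A - {a}) T)"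
    by (rule card_image) (simp add: inj_on_def)
  have f1: "finite ((\<lambda>ys. x # ys) ` Ext A T)" using fin finite_Ext by blast
  have f2: "finite ((\<lambda>zs. a # x # zs) ` Ext (A - {a}) T)" using fin finite_Ext by blast
  show ?thesis unfolding ext_Ext eq
    using card_Un_disjoint[OF f1 f2 d] c1 c2 by simp
qed



abbreviation SS :: "nat \<Rightarrow> nat \<Rightarrow> (nat \<times> nat) set" where "SS n k \<equiv> fst (pos n k)"
abbreviation LL :: "nat \<Rightarrow> nat \<Rightarrow> nat" where "LL n k \<equiv> fst (snd (pos n k))"
abbreviation RR :: "nat \<Rightarrow> nat \<Rightarrow> nat" where "RR n k \<equiv> snd (snd (pos n k))"

lemma pos2: "pos 2 k = ({(0, 1)}, 0, 1)"
  by (simp add: numeral_2_eq_2)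

lemma step_i:
  assumes "2 \<le> n" "odd ((k + 1) div 2)"
  shows "pos (Suc n) k = (SS n ((k + 1) div 2) \<union> {(n, y) | y. y < n \<and> y \<noteq> LL n ((k + 1) div 2)},
           LL n ((k + 1) div 2), n)"
proof -
  have "n = Suc (Suc (n - 2))" using assms by simp
  then obtain m where n: "n = Suc (Suc m)" by blast
  show ?thesis using assms(2) by (simp add: n Let_def split_def)
qed

lemma step_ii:
  assumes "2 \<le> n" "\<not> odd ((k + 1) div 2)"
  shows "pos (Suc n) k = (if (\<forall>y. (y, RR n ((k - 1) div 2)) \<notin> SS n ((k - 1) div 2))
           then SS n ((k - 1) div 2) \<union> {(n, y) | y. y < n \<and> y \<noteq> RR n ((k - 1) div 2)}
           else SS n ((k - 1) div 2) \<union> {(n, y) | y. y < n}, n, RR n ((k - 1) div 2))"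
proof -
  have "n = Suc (Suc (n - 2))" using assms by simp
  then obtain m where n: "n = Suc (Suc m)" by blast
  show ?thesis using assms(2) by (simp add: n Let_def split_def)
qed

lemma pos_inv:
  "2 \<le> n \<Longrightarrow> SS n k \<subseteq> {(a, b). a < n \<and> b < n \<and> a \<noteq> b} \<and> LL n k < n \<and> RR n k < n
     \<and> (\<forall>y. (y, LL n k) \<notin> SS n k)"
proof (induction n arbitrary: k rule: nat_induct_at_least)
  case base
  then show ?case by (simp add: pos2)
next
  case (Suc n)
  show ?case
  proof (cases "odd ((k + 1) div 2)")
    case True
    note ih = Suc.IH[of "(k + 1) div 2"]
    show ?thesis using step_i[OF Suc.hyps True] ih by auto
  next
    case False
    note ih = Suc.IH[of "(k - 1) div 2"]
    show ?thesis using step_ii[OF Suc.hyps False] ih by auto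
  qed
qed



lemma pow_odd_cancel:
  fixes k k' a c :: nat
  assumes "odd k'" "k * 2 ^ a = k' * 2 ^ c" "c \<le> a"
  shows "a = c \<and> k = k'"
proof -
  have "2 ^ a = (2::nat) ^ (a - c) * 2 ^ c" using assms(3) by (simp add: power_add[symmetric])
  then have e: "k * 2 ^ (a - c) = k'" using assms(2) by simp
  show ?thesis
  proof (cases "a - c")
    case 0 then show ?thesis using e assms(3) by simp
  next
    case (Suc d) then have "even k'" by (simp add: e[symmetric])
    then show ?thesis using assms(1) by simp
  qed
qed

lemma digits_unique:
  assumes "digits_code b n k" "digits_code b n' k'"
  shows "n = n' \<and> k = k'"
proof -
  have pos_case: "n = n' \<and> k = k'" if h: "n \<ge> 2" "odd k" "b = real k / 2 ^ (n - 1)"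
      "n' \<ge> 2" "odd k'" "b = real k' / 2 ^ (n' - 1)" for n k n' k'
  proof -
    have "real k * 2 ^ (n' - 1) = real k' * 2 ^ (n - 1)" using h by (simp add: field_simps)
    then have "real (k * 2 ^ (n' - 1)) = real (k' * 2 ^ (n - 1))" by simp
    then have e: "k * 2 ^ (n' - 1) = k' * 2 ^ (n - 1)" by (simp only: of_nat_eq_iff)
    show ?thesis
    proof (cases "n - 1 \<le> n' - 1")
      case True then show ?thesis using pow_odd_cancel[OF h(5) e] h by auto
    next
      case False then show ?thesis using pow_odd_cancel[OF h(2) e[symmetric]] h by auto
    qed
  qed
  have zpos: "False" if "odd k'" "b = 0" "b = real k' / 2 ^ (n' - 1)" for k' n'
  proof -
    have "k' > 0" using that(1) by (cases k') auto
    then have "real k' / 2 ^ (n' - 1) > 0" by simp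
    then show False using that by simp
  qed
  have A: "(n = 1 \<and> k = 0 \<and> b = 0) \<or> (n \<ge> 2 \<and> odd k \<and> b = real k / 2 ^ (n - 1))"
    using assms(1) unfolding digits_code_def by blast
  have B: "(n' = 1 \<and> k' = 0 \<and> b = 0) \<or> (n' \<ge> 2 \<and> odd k' \<and> b = real k' / 2 ^ (n' - 1))"
    using assms(2) unfolding digits_code_def by blast
  show ?thesis using A B pos_case[of n k n' k'] zpos[of k n] zpos[of k' n'] by auto
qed

lemma extP_code:
  assumes "digits_code b n k"
  shows "extP b = ext {0..<n} (SS n k)"
proof -
  have "b \<noteq> 1"
  proof
    assume b1: "b = 1"
    show False using assms unfolding digits_code_def
    proof
      assume "n = 1 \<and> k = 0 \<and> b = 0" then show False using b1 by simp
    next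
      assume h: "2 \<le> n \<and> odd k \<and> k < 2 ^ (n - 1) \<and> b = real k / 2 ^ (n - 1)"
      then have "real k < real (2 ^ (n - 1))" by (simp only: of_nat_less_iff)
      then have "real k < 2 ^ (n - 1)" by simp
      then have "real k / 2 ^ (n - 1) < 1" by simp
      then show False using h b1 by simp
    qed
  qed
  have "(THE (n', k'). digits_code b n' k') = (n, k)"
    by (rule the_equality) (use assms digits_unique in auto)
  then show ?thesis using \<open>b \<noteq> 1\<close> by (simp add: extP_def)
qed

lemma ext_single: "(a, a) \<notin> S \<Longrightarrow> ext {a} S = 1"
proof -
  assume h: "(a, a) \<notin> S"
  have "Ext {a} S = {[a]}"
  proof (intro equalityI subsetI)
    fix xs assume xs: "xs \<in> Ext {a} S"
    then have "length xs = 1" using distinct_card[of xs] by (simp add: Ext_def)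
    then obtain y where "xs = [y]" by (cases xs) auto
    then show "xs \<in> {[a]}" using xs by (simp add: Ext_def)
  next
    fix xs assume "xs \<in> {[a]}"
    then show "xs \<in> Ext {a} S" using h by (simp add: Ext_def okl_Cons)
  qed
  then show ?thesis by (simp add: ext_Ext)
qed

lemma extP_0: "extP 0 = 1"
proof -
  have "digits_code 0 1 0" by (simp add: digits_code_def)
  then have "extP 0 = ext {0..<1} (SS 1 0)" by (rule extP_code)
  also have "\<dots> = 1" using ext_single[of 0 "{}"] by simp
  finally show ?thesis .
qed

lemma extP_1: "extP 1 = 0" by (simp add: extP_def)

lemma ext_add_irrel:
  assumes "\<And>p. p \<in> X \<Longrightarrow> fst p \<notin> A"
  shows "ext A (S \<union> X) = ext A S"
  by (rule ext_cong) (use assms in force)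



lemma add_bottom:
  fixes n :: nat
  assumes "S \<subseteq> {(a, b). a < n \<and> b < n \<and> a \<noteq> b}" "A \<subseteq> {0..<n}"
    "\<And>y. y \<in> A \<Longrightarrow> (n, y) \<in> X" "\<And>p. p \<in> X \<Longrightarrow> fst p = n \<and> snd p \<noteq> n"
  shows "ext (insert n A) (S \<union> X) = ext A S"
proof -
  have "ext (insert n A) (S \<union> X) = ext A (S \<union> X)"
  proof (rule ext_E1)
    show "n \<notin> A" using assms(2) by auto
    have "(n, n) \<notin> S"
    proof
      assume "(n, n) \<in> S"
      with assms(1) have "(n, n) \<in> {(a, b). a < n \<and> b < n \<and> a \<noteq> b}" by blast
      then show False by simp
    qed
    moreover have "(n, n) \<notin> X" using assms(4)[of "(n, n)"] by auto
    ultimately show "(n, n) \<notin> S \<union> X" by blast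
    fix y assume y: "y \<in> A"
    have "(y, n) \<notin> S"
    proof
      assume "(y, n) \<in> S"
      with assms(1) have "(y, n) \<in> {(a, b). a < n \<and> b < n \<and> a \<noteq> b}" by blast
      then show False by simp
    qed
    moreover have "(y, n) \<notin> X" using assms(4)[of "(y, n)"] by auto
    ultimately show "(n, y) \<in> S \<union> X \<and> (y, n) \<notin> S \<union> X" using assms(3)[OF y] by blast
  qed
  also have "\<dots> = ext A S"
  proof (rule ext_add_irrel)
    fix p assume "p \<in> X"
    then have "fst p = n" using assms(4) by blast
    then show "fst p \<notin> A" using assms(2) by auto
  qed
  finally show ?thesis .
qed

lemma add_irrel_pos:
  fixes n :: nat
  assumes "A \<subseteq> {0..<n}" "\<And>p. p \<in> X \<Longrightarrow> fst p = n"
  shows "ext A (S \<union> X) = ext A S"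
proof (rule ext_add_irrel)
  fix p assume "p \<in> X"
  then have "fst p = n" using assms(2) by blast
  then show "fst p \<notin> A" using assms(1) by auto
qed

lemma half_real: "1 \<le> n \<Longrightarrow> real (2 * t) / 2 ^ n = real t / 2 ^ (n - 1)"
  by (cases n) auto

lemma extP_q:
  assumes "2 \<le> n" "odd q" "q < 2 ^ (n - 1)"
  shows "extP (real q / 2 ^ (n - 1)) = ext {0..<n} (SS n q)"
  by (rule extP_code) (use assms in \<open>simp add: digits_code_def\<close>)



lemma below_n: "S \<subseteq> {(a, b). a < (n::nat) \<and> b < n \<and> a \<noteq> b} \<Longrightarrow> (y, n) \<notin> S"
proof
  assume "S \<subseteq> {(a, b). a < n \<and> b < n \<and> a \<noteq> b}" "(y, n) \<in> S"
  then have "(y, n) \<in> {(a, b). a < n \<and> b < n \<and> a \<noteq> b}" by blast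
  then show False by simp
qed

lemma odd_half_lt:
  fixes k :: nat
  assumes "odd k" "k < 2 ^ n" "odd ((k + 1) div 2)" "2 \<le> (n::nat)"
  shows "(k + 1) div 2 < 2 ^ (n - 1)"
proof -
  obtain t where k: "k = 2 * t + 1" using assms(1) oddE by blast
  have n: "2 ^ n = 2 * (2::nat) ^ (n - 1)" using assms(4) by (cases n) auto
  have "t + 1 \<le> 2 ^ (n - 1)" using assms(2) k n by simp
  moreover have "even ((2::nat) ^ (n - 1))" using assms(4) by (cases n) auto
  moreover have "(k + 1) div 2 = t + 1" using k by simp
  ultimately show ?thesis using assms(3) by (metis le_neq_implies_less)
qed

lemma deletion:
  "2 \<le> n \<Longrightarrow> odd k \<Longrightarrow> k < 2 ^ (n - 1) \<Longrightarrow>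
   ext ({0..<n} - {LL n k}) (SS n k) = extP (real (k - 1) / 2 ^ (n - 1)) \<and>
   ((\<forall>y. (y, RR n k) \<notin> SS n k) \<longrightarrow> ext ({0..<n} - {RR n k}) (SS n k) = extP (real (k + 1) / 2 ^ (n - 1))) \<and>
   ((\<exists>y. (y, RR n k) \<in> SS n k) \<longrightarrow> k + 1 = 2 ^ (n - 1))"
proof (induction n arbitrary: k rule: nat_induct_at_least)
  case base
  then have "odd k" "k < 2" by simp_all
  then have k1: "k = 1" by presburger
  have "ext ({0..<2} - {0}) {(0::nat, 1)} = 1"
  proof -
    have "{0..<2} - {0} = {1::nat}" by auto
    then show ?thesis using ext_single[of 1 "{(0::nat, 1)}"] by simp
  qed
  then show ?case using k1 extP_0 by (simp add: pos2) (metis less_irrefl)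
next
  case (Suc n)
  obtain t where k: "k = 2 * t + 1" using Suc.prems(1) oddE by blast
  have n1: "1 \<le> n" using Suc.hyps by simp
  have inv: "SS n q \<subseteq> {(a, b). a < n \<and> b < n \<and> a \<noteq> b}" "LL n q < n" "RR n q < n"
     "\<And>y. (y, LL n q) \<notin> SS n q" for q
    using pos_inv[OF Suc.hyps, of q] by blast+
  have pw: "2 ^ n = 2 * (2::nat) ^ (n - 1)" using n1 by (cases n) auto
  have km1: "real (k - 1) / 2 ^ (Suc n - 1) = real t / 2 ^ (n - 1)"
    using half_real[OF n1, of t] k by simp
  have kp1: "real (k + 1) / 2 ^ (Suc n - 1) = real (t + 1) / 2 ^ (n - 1)"
    using half_real[OF n1, of "t + 1"] k by (simp add: algebra_simps)
  show ?case
  proof (cases "odd ((k + 1) div 2)")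
    case True
    define q where "q = (k + 1) div 2"
    have qt: "q = t + 1" using k q_def by simp
    have qodd: "odd q" using True q_def by simp
    have qlt: "q < 2 ^ (n - 1)" using odd_half_lt[OF Suc.prems(1) _ True Suc.hyps] Suc.prems(2) q_def by simp
    note IH = Suc.IH[OF qodd qlt]
    define X where "X = {(n, y) | y. y < n \<and> y \<noteq> LL n q}"
    have P: "pos (Suc n) k = (SS n q \<union> X, LL n q, n)" using step_i[OF Suc.hyps True] q_def X_def by simp
    have d1: "{0..<Suc n} - {LL n q} = insert n ({0..<n} - {LL n q})" using inv(2)[of q] by auto
    have DL: "ext ({0..<Suc n} - {LL n q}) (SS n q \<union> X) = ext ({0..<n} - {LL n q}) (SS n q)"
      unfolding d1 by (rule add_bottom[OF inv(1)]) (auto simp: X_def)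
    have d2: "{0..<Suc n} - {n} = {0..<n}" by auto
    have DR: "ext ({0..<Suc n} - {n}) (SS n q \<union> X) = ext {0..<n} (SS n q)"
      unfolding d2 by (rule add_irrel_pos) (auto simp: X_def)
    have nm: "(y, n) \<notin> SS n q \<union> X" for y
      using below_n[OF inv(1)[of q], of y] by (auto simp: X_def)
    show ?thesis
      using IH DL DR nm P km1 kp1 qt extP_q[OF Suc.hyps qodd qlt] by simp
  next
    case False
    define q where "q = (k - 1) div 2"
    have qt: "q = t" using k q_def by simp
    have qodd: "odd q" using False k q_def by simp
    have qlt: "q < 2 ^ (n - 1)" using Suc.prems(2) k pw qt by simp
    note IH = Suc.IH[OF qodd qlt]
    have d1: "{0..<Suc n} - {n} = {0..<n}" by auto
    show ?thesis
    proof (cases "\<forall>y. (y, RR n q) \<notin> SS n q")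
      case min: True
      define X where "X = {(n, y) | y. y < n \<and> y \<noteq> RR n q}"
      have P: "pos (Suc n) k = (SS n q \<union> X, n, RR n q)" using step_ii[OF Suc.hyps False] q_def X_def min by simp
      have DL: "ext ({0..<Suc n} - {n}) (SS n q \<union> X) = ext {0..<n} (SS n q)"
        unfolding d1 by (rule add_irrel_pos) (auto simp: X_def)
      have d2: "{0..<Suc n} - {RR n q} = insert n ({0..<n} - {RR n q})" using inv(3)[of q] by auto
      have DR: "ext ({0..<Suc n} - {RR n q}) (SS n q \<union> X) = ext ({0..<n} - {RR n q}) (SS n q)"
        unfolding d2 by (rule add_bottom[OF inv(1)]) (auto simp: X_def)
      have nm: "(y, RR n q) \<notin> SS n q \<union> X" for y
        using min by (auto simp: X_def)
      show ?thesis
        using IH DL DR nm P km1 kp1 qt min extP_q[OF Suc.hyps qodd qlt] by simp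
    next
      case nmin: False
      define X where "X = {(n, y) | y. y < n}"
      have P: "pos (Suc n) k = (SS n q \<union> X, n, RR n q)" using step_ii[OF Suc.hyps False, folded q_def] X_def nmin by (simp only: if_False)
      have DL: "ext ({0..<Suc n} - {n}) (SS n q \<union> X) = ext {0..<n} (SS n q)"
        unfolding d1 by (rule add_irrel_pos) (auto simp: X_def)
      have e: "t + 1 = 2 ^ (n - 1)" using IH nmin qt by blast
      have "k + 1 = 2 ^ n" using e k pw by simp
      then show ?thesis
        using IH DL P km1 qt nmin extP_q[OF Suc.hyps qodd qlt] by auto
    qed
  qed
qed



lemma add_split:
  fixes n :: nat
  assumes S: "S \<subseteq> {(a, b). a < n \<and> b < n \<and> a \<noteq> b}" and a: "a < n"
    and amin: "\<And>y. (y, a) \<notin> S" and X: "X = {(n, y) | y. y < n \<and> y \<noteq> a}"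
  shows "ext {0..<Suc n} (S \<union> X) = ext {0..<n} S + ext ({0..<n} - {a}) S"
proof -
  have d: "{0..<Suc n} = insert n {0..<n}" by auto
  have "ext (insert n {0..<n}) (S \<union> X) = ext {0..<n} (S \<union> X) + ext ({0..<n} - {a}) (S \<union> X)"
  proof (rule ext_E2)
    show "finite {0..<n}" by simp
    show "n \<notin> {0..<n}" by simp
    show "a \<in> {0..<n}" using a by simp
    have "(n, n) \<notin> S" using below_n[OF S] by blast
    then show "(n, n) \<notin> S \<union> X" using X by simp
    have "(n, a) \<notin> S" using amin by blast
    then show "(n, a) \<notin> S \<union> X" using X by simp
    fix y assume y: "y \<in> {0..<n}"
    have "(y, n) \<notin> S" using below_n[OF S] by blast
    moreover have "(y, n) \<notin> X" using X y by simp
    moreover have "(y, a) \<notin> X" using X y by simp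
    ultimately show "(y, n) \<notin> S \<union> X \<and> (y, a) \<notin> S \<union> X" using amin by blast
  next
    fix y assume "y \<in> {0..<n}" "y \<noteq> a"
    then show "(n, y) \<in> S \<union> X" using X by simp
  qed
  also have "ext {0..<n} (S \<union> X) = ext {0..<n} S"
    by (rule add_irrel_pos) (use X in auto)
  also have "ext ({0..<n} - {a}) (S \<union> X) = ext ({0..<n} - {a}) S"
    by (rule add_irrel_pos) (use X in auto)
  finally show ?thesis unfolding d .
qed

lemma main_nat:
  assumes n: "2 \<le> n" and ko: "odd k" and kl: "k < 2 ^ (n - 1)"
  shows "ext {0..<n} (SS n k) = extP (real (k - 1) / 2 ^ (n - 1)) + extP (real (k + 1) / 2 ^ (n - 1))"
proof (cases "n = 2")
  case True
  then have "odd k" "k < 2" using ko kl by simp_all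
  then have k1: "k = 1" by presburger
  have "ext (insert 0 {1}) {(0::nat, 1)} = ext {1} {(0::nat, 1)}"
    by (rule ext_E1) auto
  also have "\<dots> = 1" by (rule ext_single) simp
  finally have e: "ext {0..<2} {(0::nat, 1)} = 1"
    by (metis atLeast0_lessThan_Suc insert_commute lessThan_0 numeral_2_eq_2 One_nat_def empty_iff insert_absorb2 atLeast0LessThan atLeastLessThan_empty_iff2 lessThan_Suc)
  show ?thesis using True k1 e extP_0 extP_1 by (simp add: pos2)
next
  case False
  then obtain m where nm: "n = Suc m" and m2: "2 \<le> m" using n by (cases n) auto
  obtain t where k: "k = 2 * t + 1" using ko oddE by blast
  have m1: "1 \<le> m" using m2 by simp
  have inv: "SS m q \<subseteq> {(a, b). a < m \<and> b < m \<and> a \<noteq> b}" "LL m q < m" "RR m q < m"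
     "\<And>y. (y, LL m q) \<notin> SS m q" for q
    using pos_inv[OF m2, of q] by blast+
  have pw: "2 ^ m = 2 * (2::nat) ^ (m - 1)" using m1 by (cases m) auto
  have km1: "real (k - 1) / 2 ^ (n - 1) = real t / 2 ^ (m - 1)"
    using half_real[OF m1, of t] k nm by simp
  have kp1: "real (k + 1) / 2 ^ (n - 1) = real (t + 1) / 2 ^ (m - 1)"
    using half_real[OF m1, of "t + 1"] k nm by (simp add: algebra_simps)
  have kl': "k < 2 ^ m" using kl nm by simp
  show ?thesis
  proof (cases "odd ((k + 1) div 2)")
    case True
    define q where "q = (k + 1) div 2"
    have qt: "q = t + 1" using k q_def by simp
    have qodd: "odd q" using True q_def by simp
    have qlt: "q < 2 ^ (m - 1)" using odd_half_lt[OF ko kl' True m2] q_def by simp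
    note D = deletion[OF m2 qodd qlt]
    define X where "X = {(m, y) | y. y < m \<and> y \<noteq> LL m q}"
    have P: "pos n k = (SS m q \<union> X, LL m q, m)" using step_i[OF m2 True] q_def X_def nm by simp
    have E: "ext {0..<Suc m} (SS m q \<union> X) = ext {0..<m} (SS m q) + ext ({0..<m} - {LL m q}) (SS m q)"
      by (rule add_split[OF inv(1) inv(2) inv(4) X_def])
    show ?thesis
      using E P D km1 kp1 qt extP_q[OF m2 qodd qlt] nm by simp
  next
    case False
    define q where "q = (k - 1) div 2"
    have qt: "q = t" using k q_def by simp
    have qodd: "odd q" using False k q_def by simp
    have qlt: "q < 2 ^ (m - 1)" using kl' k pw qt by simp
    note D = deletion[OF m2 qodd qlt]
    show ?thesis
    proof (cases "\<forall>y. (y, RR m q) \<notin> SS m q")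
      case min: True
      define X where "X = {(m, y) | y. y < m \<and> y \<noteq> RR m q}"
      have P: "pos n k = (SS m q \<union> X, m, RR m q)"
        using step_ii[OF m2 False, folded q_def] X_def min nm by simp
      have E: "ext {0..<Suc m} (SS m q \<union> X) = ext {0..<m} (SS m q) + ext ({0..<m} - {RR m q}) (SS m q)"
        by (rule add_split[OF inv(1) inv(3) _ X_def]) (use min in blast)
      show ?thesis
        using E P D km1 kp1 qt min extP_q[OF m2 qodd qlt] nm by simp
    next
      case nmin: False
      define X where "X = {(m, y) | y. y < m}"
      have P: "pos n k = (SS m q \<union> X, m, RR m q)"
        using step_ii[OF m2 False, folded q_def] X_def nmin nm by (simp only: if_False)
      have E: "ext {0..<Suc m} (SS m q \<union> X) = ext {0..<m} (SS m q)"
      proof -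
        have "{0..<Suc m} = insert m {0..<m}" by auto
        moreover have "ext (insert m {0..<m}) (SS m q \<union> X) = ext {0..<m} (SS m q)"
          by (rule add_bottom[OF inv(1)]) (auto simp: X_def)
        ultimately show ?thesis by simp
      qed
      have e: "t + 1 = 2 ^ (m - 1)" using D nmin qt by blast
      have "real (t + 1) = real ((2::nat) ^ (m - 1))" using e by (simp only:)
      then have "real (t + 1) = 2 ^ (m - 1)" by simp
      then have "real (k + 1) / 2 ^ (n - 1) = 1" using kp1 by simp
      then show ?thesis
        using E P km1 qt extP_q[OF m2 qodd qlt] nm extP_1 by simp
    qed
  qed
qed



theorem proposition3p1:
  fixes b :: real and n :: nat
  assumes "n \<ge> 2" and "has_digits b n"
  shows "extP b = extP (b - 1 / 2 ^ (n - 1)) + extP (b + 1 / 2 ^ (n - 1))"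
proof -
  obtain k where dc: "digits_code b n k" using assms(2) unfolding has_digits_def by blast
  then have ko: "odd k" and kl: "k < 2 ^ (n - 1)" and bk: "b = real k / 2 ^ (n - 1)"
    using assms(1) unfolding digits_code_def by auto
  have k1: "1 \<le> k" using ko by (cases k) auto
  have "b - 1 / 2 ^ (n - 1) = (real k - 1) / 2 ^ (n - 1)" using bk by (simp add: diff_divide_distrib)
  also have "\<dots> = real (k - 1) / 2 ^ (n - 1)" using k1 by (simp add: of_nat_diff)
  finally have m: "b - 1 / 2 ^ (n - 1) = real (k - 1) / 2 ^ (n - 1)" .
  have p: "b + 1 / 2 ^ (n - 1) = real (k + 1) / 2 ^ (n - 1)" using bk by (simp add: add_divide_distrib)
  show ?thesis unfolding m p extP_code[OF dc] using main_nat[OF assms(1) ko kl] .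
qed


end
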